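(* Let $p$ be a prime and let $G$ be a $2$-tuple regular finite group of exponent $p^s$ for some $s\in\mathbb{N}$. For every $i\in\{0,\ldots,s\}$, every element of $\Omega_i(G)$ has order at most $p^i$ and is a $p^{s-i}$-th power of an element of $G$. In particular, $\Omega_i(G)$ is $2$-tuple regular.
   Context: $\Omega_i(G)$ is the subgroup generated by all elements of order dividing $p^i$. A finite group $G$ is $2$-tuple regular if for all pairs $(g_1,g_2),(h_1,h_2)\in G^2$ (entries may coincide) for which $g_1\mapsto h_1,g_2\mapsto h_2$ defines an isomorphism $\langle g_1,g_2\rangle\to\langle h_1,h_2\rangle$, there is a bijection $\Psi\colon G\to G$ such that for every $g\in G$ the assignment $g_1\mapsto h_1,g_2\mapsto h_2,g\mapsto\Psi(g)$ defines an isomorphism $\langle g_1,g_2,g\rangle\to\langle h_1,h_2,\Psi(g)\rangle$. *)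

theory Defs
  imports "HOL-Algebra.Algebra"
begin

definition group_exponent :: "('a, 'b) monoid_scheme \<Rightarrow> nat" where
  "group_exponent G = Lcm (group.ord G ` carrier G)"

definition Omega :: "('a, 'b) monoid_scheme \<Rightarrow> nat \<Rightarrow> nat \<Rightarrow> 'a set" where
  "Omega G p i = generate G {x \<in> carrier G. x [^]\<^bsub>G\<^esub> (p ^ i) = \<one>\<^bsub>G\<^esub>}"

definition defines_iso :: "('a, 'b) monoid_scheme \<Rightarrow> 'a list \<Rightarrow> 'a list \<Rightarrow> bool" where
  "defines_iso G gs hs \<longleftrightarrow> length gs = length hs \<and>
     (\<exists>\<phi>. \<phi> \<in> iso (G\<lparr>carrier := generate G (set gs)\<rparr>) (G\<lparr>carrier := generate G (set hs)\<rparr>) \<and>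
          (\<forall>k < length gs. \<phi> (gs ! k) = hs ! k))"

definition two_tuple_regular :: "('a, 'b) monoid_scheme \<Rightarrow> bool" where
  "two_tuple_regular G \<longleftrightarrow>
     (\<forall>g1 \<in> carrier G. \<forall>g2 \<in> carrier G. \<forall>h1 \<in> carrier G. \<forall>h2 \<in> carrier G.
        defines_iso G [g1, g2] [h1, h2] \<longrightarrow>
        (\<exists>\<Psi>. bij_betw \<Psi> (carrier G) (carrier G) \<and>
             (\<forall>g \<in> carrier G. defines_iso G [g1, g2, g] [h1, h2, \<Psi> g])))"

end

theory Submission
  imports Defs
begin



lemma sub_group_hom:
  assumes G: "group G" and A: "A \<subseteq> carrier G" and B: "B \<subseteq> carrier G"
    and phi: "\<phi> \<in> iso (G\<lparr>carrier := generate G A\<rparr>) (G\<lparr>carrier := generate G B\<rparr>)"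
  shows "group_hom (G\<lparr>carrier := generate G A\<rparr>) (G\<lparr>carrier := generate G B\<rparr>) \<phi>"
  using phi G A B
  by (simp add: group_hom_def group_hom_axioms_def iso_def group.subgroup_imp_group
        group.generate_is_subgroup)

lemma iso_pow_one:
  assumes G: "group G" and A: "A \<subseteq> carrier G" and B: "B \<subseteq> carrier G"
    and phi: "\<phi> \<in> iso (G\<lparr>carrier := generate G A\<rparr>) (G\<lparr>carrier := generate G B\<rparr>)"
    and u: "u \<in> generate G A"
  shows "\<phi> u \<in> generate G B" and "\<phi> (u [^]\<^bsub>G\<^esub> (n::nat)) = \<phi> u [^]\<^bsub>G\<^esub> n"
    and "(\<phi> u [^]\<^bsub>G\<^esub> (n::nat) = \<one>\<^bsub>G\<^esub>) \<longleftrightarrow> (u [^]\<^bsub>G\<^esub> n = \<one>\<^bsub>G\<^esub>)"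
proof -
  interpret gh: group_hom "G\<lparr>carrier := generate G A\<rparr>" "G\<lparr>carrier := generate G B\<rparr>" \<phi>
    by (rule sub_group_hom[OF G A B phi])
  interpret G: group G by (rule G)
  show "\<phi> u \<in> generate G B" using u gh.hom_closed by simp
  have pw: "\<phi> (u [^]\<^bsub>G\<^esub> m) = \<phi> u [^]\<^bsub>G\<^esub> m" for m :: nat
    using gh.hom_nat_pow[of u m] u by (simp add: G.nat_pow_consistent[symmetric])
  then show "\<phi> (u [^]\<^bsub>G\<^esub> n) = \<phi> u [^]\<^bsub>G\<^esub> n" .
  have uc: "u [^]\<^bsub>G\<^esub> n \<in> generate G A"
    using gh.G.nat_pow_closed[of u n] u by (simp add: G.nat_pow_consistent[symmetric])
  have inj: "inj_on \<phi> (generate G A)" using phi by (simp add: iso_def bij_betw_def)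
  have one: "\<phi> \<one>\<^bsub>G\<^esub> = \<one>\<^bsub>G\<^esub>" using gh.hom_one by simp
  have oneA: "\<one>\<^bsub>G\<^esub> \<in> generate G A" by (rule generate.one)
  show "(\<phi> u [^]\<^bsub>G\<^esub> n = \<one>\<^bsub>G\<^esub>) \<longleftrightarrow> (u [^]\<^bsub>G\<^esub> n = \<one>\<^bsub>G\<^esub>)"
    using inj uc oneA one pw[of n] by (metis inj_on_eq_iff)
qed

lemma iso_mult_inv:
  assumes G: "group G" and A: "A \<subseteq> carrier G" and B: "B \<subseteq> carrier G"
    and phi: "\<phi> \<in> iso (G\<lparr>carrier := generate G A\<rparr>) (G\<lparr>carrier := generate G B\<rparr>)"
    and u: "u \<in> generate G A" and v: "v \<in> generate G A"
  shows "(v \<otimes>\<^bsub>G\<^esub> u) \<otimes>\<^bsub>G\<^esub> inv\<^bsub>G\<^esub> (u \<otimes>\<^bsub>G\<^esub> v) \<in> generate G A"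
    and "\<phi> ((v \<otimes>\<^bsub>G\<^esub> u) \<otimes>\<^bsub>G\<^esub> inv\<^bsub>G\<^esub> (u \<otimes>\<^bsub>G\<^esub> v))
        = (\<phi> v \<otimes>\<^bsub>G\<^esub> \<phi> u) \<otimes>\<^bsub>G\<^esub> inv\<^bsub>G\<^esub> (\<phi> u \<otimes>\<^bsub>G\<^esub> \<phi> v)"
proof -
  interpret gh: group_hom "G\<lparr>carrier := generate G A\<rparr>" "G\<lparr>carrier := generate G B\<rparr>" \<phi>
    by (rule sub_group_hom[OF G A B phi])
  interpret G: group G by (rule G)
  have sA: "subgroup (generate G A) G" using G.generate_is_subgroup[OF A] .
  have sB: "subgroup (generate G B) G" using G.generate_is_subgroup[OF B] .
  have uv: "u \<otimes>\<^bsub>G\<^esub> v \<in> generate G A" "v \<otimes>\<^bsub>G\<^esub> u \<in> generate G A"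
    using u v sA by (auto intro: subgroup.m_closed)
  have i: "inv\<^bsub>G\<^esub> (u \<otimes>\<^bsub>G\<^esub> v) \<in> generate G A" using uv sA by (auto intro: subgroup.m_inv_closed)
  show "(v \<otimes>\<^bsub>G\<^esub> u) \<otimes>\<^bsub>G\<^esub> inv\<^bsub>G\<^esub> (u \<otimes>\<^bsub>G\<^esub> v) \<in> generate G A"
    using uv i sA by (auto intro: subgroup.m_closed)
  have pu: "\<phi> u \<in> generate G B" "\<phi> v \<in> generate G B" using u v gh.hom_closed by auto
  have puv: "\<phi> u \<otimes>\<^bsub>G\<^esub> \<phi> v \<in> generate G B" using pu sB by (auto intro: subgroup.m_closed)
  have m: "\<phi> (x \<otimes>\<^bsub>G\<^esub> y) = \<phi> x \<otimes>\<^bsub>G\<^esub> \<phi> y" if "x \<in> generate G A" "y \<in> generate G A" for x y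
    using gh.hom_mult[of x y] that by simp
  have iv: "\<phi> (inv\<^bsub>G\<^esub> (u \<otimes>\<^bsub>G\<^esub> v)) = inv\<^bsub>G\<^esub> (\<phi> u \<otimes>\<^bsub>G\<^esub> \<phi> v)"
    using gh.hom_inv[of "u \<otimes>\<^bsub>G\<^esub> v"] uv m[OF u v] puv sA sB
    by (simp add: G.m_inv_consistent)
  show "\<phi> ((v \<otimes>\<^bsub>G\<^esub> u) \<otimes>\<^bsub>G\<^esub> inv\<^bsub>G\<^esub> (u \<otimes>\<^bsub>G\<^esub> v))
        = (\<phi> v \<otimes>\<^bsub>G\<^esub> \<phi> u) \<otimes>\<^bsub>G\<^esub> inv\<^bsub>G\<^esub> (\<phi> u \<otimes>\<^bsub>G\<^esub> \<phi> v)"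
    using m[OF uv(2) i] m[OF v u] iv by simp
qed

context group begin

lemma pow_mod_ord:
  assumes fin: "finite (carrier G)" and x: "x \<in> carrier G"
  shows "x [^] k = x [^] (k mod ord x)"
proof -
  have "x [^] k = x [^] (k mod ord x + ord x * (k div ord x))" by (simp only: mod_mult_div_eq)
  also have "\<dots> = x [^] (k mod ord x) \<otimes> (x [^] ord x) [^] (k div ord x)"
    by (metis nat_pow_mult nat_pow_pow x)
  also have "\<dots> = x [^] (k mod ord x)" using x by simp
  finally show ?thesis .
qed

lemma pow_eq_iff_mod:
  assumes fin: "finite (carrier G)" and x: "x \<in> carrier G"
  shows "x [^] (k::nat) = x [^] (l::nat) \<longleftrightarrow> k mod ord x = l mod ord x"
proof
  assume "x [^] k = x [^] l"
  hence e: "x [^] (k mod ord x) = x [^] (l mod ord x)" using pow_mod_ord[OF fin x] by metis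
  have o: "ord x \<ge> 1" using ord_ge_1[OF fin x] .
  have "k mod ord x \<in> {0 .. ord x - 1}" "l mod ord x \<in> {0 .. ord x - 1}"
    using o by (auto simp: less_Suc_eq_le[symmetric])
  thus "k mod ord x = l mod ord x" using ord_inj[OF x] e unfolding inj_on_def by blast
next
  assume "k mod ord x = l mod ord x"
  thus "x [^] k = x [^] l" using pow_mod_ord[OF fin x] by metis
qed

lemma cyclic_iso:
  assumes fin: "finite (carrier G)" and x: "x \<in> carrier G" and a: "a \<in> carrier G"
    and o: "ord x = ord a"
  shows "\<exists>\<phi>. \<phi> \<in> iso (G\<lparr>carrier := generate G {x}\<rparr>) (G\<lparr>carrier := generate G {a}\<rparr>) \<and> \<phi> x = a"
proof -
  define \<phi> where "\<phi> u = a [^] (SOME k::nat. u = x [^] k)" for u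
  have gx: "generate G {x} = {x [^] k | k. k \<in> (UNIV::nat set)}"
    by (rule generate_pow_on_finite_carrier[OF fin x])
  have ga: "generate G {a} = {a [^] k | k. k \<in> (UNIV::nat set)}"
    by (rule generate_pow_on_finite_carrier[OF fin a])
  have key: "\<phi> (x [^] k) = a [^] k" for k::nat
  proof -
    let ?k = "SOME k'::nat. x [^] k = x [^] k'"
    have "x [^] k = x [^] ?k" by (rule someI[of _ k]) simp
    hence "k mod ord x = ?k mod ord x" using pow_eq_iff_mod[OF fin x] by blast
    hence "a [^] ?k = a [^] k" using pow_eq_iff_mod[OF fin a] o by simp
    thus ?thesis unfolding \<phi>_def by simp
  qed
  have hom: "\<phi> \<in> hom (G\<lparr>carrier := generate G {x}\<rparr>) (G\<lparr>carrier := generate G {a}\<rparr>)"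
  proof (rule homI)
    fix u assume "u \<in> carrier (G\<lparr>carrier := generate G {x}\<rparr>)"
    hence "u \<in> generate G {x}" by simp
    then obtain k::nat where "u = x [^] k" using gx by blast
    thus "\<phi> u \<in> carrier (G\<lparr>carrier := generate G {a}\<rparr>)" using key ga by auto
  next
    fix u v assume "u \<in> carrier (G\<lparr>carrier := generate G {x}\<rparr>)" "v \<in> carrier (G\<lparr>carrier := generate G {x}\<rparr>)"
    hence "u \<in> generate G {x}" "v \<in> generate G {x}" by simp_all
    then obtain k l :: nat where kl: "u = x [^] k" "v = x [^] l" using gx by blast
    have "\<phi> (u \<otimes> v) = \<phi> (x [^] (k + l))" using kl x by (simp add: nat_pow_mult)
    also have "\<dots> = a [^] k \<otimes> a [^] l" using key a by (simp add: nat_pow_mult)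
    finally show "\<phi> (u \<otimes>\<^bsub>G\<lparr>carrier := generate G {x}\<rparr>\<^esub> v) = \<phi> u \<otimes>\<^bsub>G\<lparr>carrier := generate G {a}\<rparr>\<^esub> \<phi> v"
      using kl key by simp
  qed
  have inj: "inj_on \<phi> (generate G {x})"
  proof (rule inj_onI)
    fix u v assume "u \<in> generate G {x}" "v \<in> generate G {x}" "\<phi> u = \<phi> v"
    then obtain k l :: nat where kl: "u = x [^] k" "v = x [^] l" "a [^] k = a [^] l" using gx key by auto
    thus "u = v" using pow_eq_iff_mod[OF fin a] pow_eq_iff_mod[OF fin x] o by simp
  qed
  have img: "\<phi> ` generate G {x} = generate G {a}"
  proof
    show "\<phi> ` generate G {x} \<subseteq> generate G {a}" using gx ga key by auto
    show "generate G {a} \<subseteq> \<phi> ` generate G {x}"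
    proof
      fix w assume "w \<in> generate G {a}"
      then obtain k::nat where "w = a [^] k" using ga by auto
      hence "w = \<phi> (x [^] k)" using key by simp
      moreover have "x [^] k \<in> generate G {x}" using gx by auto
      ultimately show "w \<in> \<phi> ` generate G {x}" by blast
    qed
  qed
  have "\<phi> x = a" using key[of 1] x a by simp
  thus ?thesis using hom inj img unfolding iso_def bij_betw_def by auto
qed

end




lemma only_prime_power:
  fixes p :: nat
  assumes "Factorial_Ring.prime p"
  shows "n > 0 \<Longrightarrow> (\<forall>q. Factorial_Ring.prime q \<longrightarrow> q dvd n \<longrightarrow> q = p) \<Longrightarrow> \<exists>k. n = p ^ k"
proof (induction n rule: less_induct)
  case (less n)
  show ?case
  proof (cases "n = 1")
    case True then show ?thesis by (metis power_0)
  next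
    case False
    then obtain q where q: "Factorial_Ring.prime q" "q dvd n" using prime_factor_nat by blast
    hence qp: "q = p" using less.prems by blast
    then obtain m where m: "n = p * m" using q by blast
    have p1: "p > 1" using assms prime_gt_1_nat by blast
    have m0: "m > 0" using m less.prems(1) by (cases m) auto
    have mn: "m < n" using m p1 m0 by simp
    have "\<forall>q. Factorial_Ring.prime q \<longrightarrow> q dvd m \<longrightarrow> q = p"
      using less.prems(2) m by (metis dvd_mult)
    then obtain k where "m = p ^ k" using less.IH[OF mn m0] by blast
    hence "n = p ^ Suc k" using m by simp
    thus ?thesis by blast
  qed
qed

context group begin

lemma pgroup_order:
  assumes fin: "finite (carrier G)" and p: "Factorial_Ring.prime p"
    and ex: "\<forall>x\<in>carrier G. x [^] (p ^ s) = \<one>"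
  shows "\<exists>k. order G = p ^ k"
proof -
  have qp: "q = p" if q: "Factorial_Ring.prime q" "q dvd order G" for q
  proof (rule ccontr)
    assume nq: "q \<noteq> p"
    define a where "a = multiplicity q (order G)"
    define m where "m = order G div q ^ a"
    have "q ^ a dvd order G" unfolding a_def by (rule multiplicity_dvd)
    hence og: "order G = q ^ a * m" unfolding m_def by simp
    obtain H where H: "subgroup H G" "card H = q ^ a"
      using sylow_thm[OF q(1) is_group og fin] by blast
    have o0: "order G \<noteq> 0" using fin order_gt_0_iff_finite by auto
    have a0: "a > 0" unfolding a_def using prime_multiplicity_gt_zero_iff[of q "order G"] q o0
      by (simp add: prime_elem_nat_iff)
    have q1: "q > 1" using q prime_gt_1_nat by blast
    have "1 < q ^ a" using q1 a0 by (rule one_less_power)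
    hence "card H > 1" using H(2) by simp
    have "\<not> H \<subseteq> {\<one>}"
    proof
      assume "H \<subseteq> {\<one>}"
      hence "card H \<le> card {\<one>}" by (rule card_mono[rotated]) simp
      thus False using \<open>card H > 1\<close> by simp
    qed
    then obtain h where h: "h \<in> H" "h \<noteq> \<one>" by blast
    have hc: "h \<in> carrier G" using subgroup.mem_carrier[OF H(1) h(1)] .
    interpret Hg: group "G\<lparr>carrier := H\<rparr>" using subgroup_imp_group[OF H(1)] .
    have "h [^]\<^bsub>G\<lparr>carrier := H\<rparr>\<^esub> order (G\<lparr>carrier := H\<rparr>) = \<one>\<^bsub>G\<lparr>carrier := H\<rparr>\<^esub>"
      using Hg.pow_order_eq_1[of h] h by simp
    hence "h [^] (q ^ a) = \<one>" using H(2) by (simp add: order_def nat_pow_consistent[symmetric])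
    hence d1: "ord h dvd q ^ a" using pow_eq_id[OF hc, of "q ^ a"] by simp
    have d2: "ord h dvd p ^ s" using pow_eq_id[OF hc, of "p ^ s"] ex hc by simp
    have cop: "coprime (q ^ a) (p ^ s)" using primes_coprime[OF q(1) p nq] by simp
    have "ord h = 1" using coprime_common_divisor[OF cop d1 d2] by simp
    thus False using ord_eq_1[OF hc] h(2) by simp
  qed
  have "order G > 0" using fin order_gt_0_iff_finite by auto
  thus ?thesis using only_prime_power[OF p] qp by blast
qed

lemma pgroup_center:
  assumes fin: "finite (carrier G)" and p: "Factorial_Ring.prime p"
    and o: "order G = p ^ k" and k: "k \<ge> 1"
  shows "\<exists>z\<in>carrier G. z \<noteq> \<one> \<and> (\<forall>g\<in>carrier G. z \<otimes> g = g \<otimes> z)"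
proof (rule ccontr)
  assume nz: "\<not> ?thesis"
  define \<phi> where "\<phi> = (\<lambda>g. (\<lambda>h \<in> carrier G. g \<otimes> h \<otimes> (inv g)))"
  interpret A: group_action G "carrier G" \<phi> unfolding \<phi>_def by (rule action_by_conjugation)
  have orb: "orbit G \<phi> x = {g \<otimes> x \<otimes> inv g | g. g \<in> carrier G}" if "x \<in> carrier G" for x
    unfolding orbit_def \<phi>_def using that by auto
  have p1: "p > 1" using p prime_gt_1_nat by blast
  have pd: "p dvd card (orbit G \<phi> x)" if x: "x \<in> carrier G" "x \<noteq> \<one>" for x
  proof -
    have e: "p ^ k = card (orbit G \<phi> x) * card (stabilizer G \<phi> x)"
      using A.orbit_stabilizer_theorem[OF x(1)] o by simp
    have "card (orbit G \<phi> x) dvd p ^ k" unfolding e by (rule dvd_triv_left)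
    then obtain j where j: "card (orbit G \<phi> x) = p ^ j" using divides_primepow_nat[OF p] by blast
    show ?thesis
    proof (cases "j = 0")
      case True
      have xo: "x \<in> orbit G \<phi> x" using orb[OF x(1)] x(1)
        by (auto intro!: exI[of _ \<one>])
      have "card (orbit G \<phi> x) = 1" using j True by simp
      then obtain y where "orbit G \<phi> x = {y}" by (rule card_1_singletonE)
      hence os: "orbit G \<phi> x = {x}" using xo by simp
      have "x \<otimes> g = g \<otimes> x" if g: "g \<in> carrier G" for g
      proof -
        have e: "g \<otimes> x \<otimes> inv g = x" using os orb[OF x(1)] g by blast
        have "x \<otimes> g = (g \<otimes> x \<otimes> inv g) \<otimes> g" using e by simp
        also have "\<dots> = g \<otimes> x" using g x(1) by (simp add: m_assoc)
        finally show ?thesis by simp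
      qed
      thus ?thesis using nz x by blast
    next
      case False
      thus ?thesis using j by simp
    qed
  qed
  have o1: "orbit G \<phi> \<one> = {\<one>}"
  proof
    show "orbit G \<phi> \<one> \<subseteq> {\<one>}"
    proof
      fix w assume "w \<in> orbit G \<phi> \<one>"
      then obtain g where "g \<in> carrier G" "w = g \<otimes> \<one> \<otimes> inv g" using orb[OF one_closed] by blast
      thus "w \<in> {\<one>}" by simp
    qed
    have "\<one> \<otimes> \<one> \<otimes> inv \<one> = \<one>" by simp
    hence "\<one> \<in> {g \<otimes> \<one> \<otimes> inv g | g. g \<in> carrier G}"
      by (intro CollectI exI[of _ "\<one>"]) simp
    thus "{\<one>} \<subseteq> orbit G \<phi> \<one>" using orb[OF one_closed] by simp
  qed
  have finO: "finite (orbits G (carrier G) \<phi>)"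
  proof -
    have "orbits G (carrier G) \<phi> \<subseteq> Pow (carrier G)"
      unfolding orbits_def using orb by auto
    thus ?thesis using fin by (meson finite_Pow_iff finite_subset)
  qed
  have e1: "(\<Sum>x\<in>orb. (1::nat)) = card orb" for orb :: "'a set" by simp
  have "(\<Sum>orb\<in>orbits G (carrier G) \<phi>. \<Sum>x\<in>orb. (1::nat)) = (\<Sum>x\<in>carrier G. 1)"
    by (rule A.disjoint_sum[OF fin])
  hence sum: "(\<Sum>orb\<in>orbits G (carrier G) \<phi>. card orb) = order G"
    unfolding order_def by (simp only: e1)
  have one_in: "{\<one>} \<in> orbits G (carrier G) \<phi>" unfolding orbits_def using o1 by force
  have pS: "p dvd (\<Sum>orb\<in>orbits G (carrier G) \<phi> - {{\<one>}}. card orb)"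
  proof (rule dvd_sum)
    fix orb assume "orb \<in> orbits G (carrier G) \<phi> - {{\<one>}}"
    then obtain x where x: "x \<in> carrier G" "orb = orbit G \<phi> x" "orb \<noteq> {\<one>}"
      unfolding orbits_def by auto
    hence "x \<noteq> \<one>" using o1 by auto
    thus "p dvd card orb" using pd x by blast
  qed
  have "(\<Sum>orb\<in>orbits G (carrier G) \<phi>. card orb)
      = 1 + (\<Sum>orb\<in>orbits G (carrier G) \<phi> - {{\<one>}}. card orb)"
    using sum.remove[OF finO one_in, of card] by simp
  hence oS: "order G = 1 + (\<Sum>orb\<in>orbits G (carrier G) \<phi> - {{\<one>}}. card orb)" using sum by simp
  have "p dvd order G" using o k by (simp add: dvd_power)
  hence "p dvd 1" unfolding oS using dvd_add_left_iff[OF pS] by blast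
  thus False using p1 by simp
qed

end




context group begin

lemma conj_pow:
  assumes g: "g \<in> carrier G" and x: "x \<in> carrier G"
  shows "(g \<otimes> x \<otimes> inv g) [^] (n::nat) = g \<otimes> x [^] n \<otimes> inv g"
proof (induction n)
  case 0 thus ?case using g by simp
next
  case (Suc n)
  have s1: "(g \<otimes> x \<otimes> inv g) [^] Suc n = (g \<otimes> x [^] n \<otimes> inv g) \<otimes> (g \<otimes> x \<otimes> inv g)"
    using Suc by simp
  have c: "inv g \<otimes> (g \<otimes> y) = y" if "y \<in> carrier G" for y
    using g that by (simp add: m_assoc[symmetric])
  have "(g \<otimes> x [^] n \<otimes> inv g) \<otimes> (g \<otimes> x \<otimes> inv g) = g \<otimes> (x [^] n \<otimes> (inv g \<otimes> (g \<otimes> (x \<otimes> inv g))))"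
    using g x by (simp add: m_assoc)
  also have "\<dots> = g \<otimes> (x [^] n \<otimes> (x \<otimes> inv g))" using g x c by simp
  also have "\<dots> = g \<otimes> x [^] Suc n \<otimes> inv g" using g x by (simp add: m_assoc)
  finally have "(g \<otimes> x [^] n \<otimes> inv g) \<otimes> (g \<otimes> x \<otimes> inv g) = g \<otimes> x [^] Suc n \<otimes> inv g" .
  thus ?case using s1 by simp
qed

lemma pow_comm:
  assumes z: "z \<in> carrier G" and g: "g \<in> carrier G" and c: "z \<otimes> g = g \<otimes> z"
  shows "z [^] (n::nat) \<otimes> g = g \<otimes> z [^] n"
proof (induction n)
  case 0 thus ?case using g by simp
next
  case (Suc n)
  have "z [^] Suc n \<otimes> g = z [^] n \<otimes> (z \<otimes> g)" using z g by (simp add: m_assoc)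
  also have "\<dots> = (z [^] n \<otimes> g) \<otimes> z" using z g c by (simp add: m_assoc)
  also have "\<dots> = g \<otimes> z [^] Suc n" using Suc z g by (simp add: m_assoc)
  finally show ?case .
qed

lemma defines_iso_pow:
  assumes d: "defines_iso G gs hs" and gs: "set gs \<subseteq> carrier G" and hs: "set hs \<subseteq> carrier G"
    and k: "k < length gs"
  shows "(hs ! k) [^] (n::nat) = \<one> \<longleftrightarrow> (gs ! k) [^] n = \<one>"
proof -
  obtain \<phi> where phi: "\<phi> \<in> iso (G\<lparr>carrier := generate G (set gs)\<rparr>) (G\<lparr>carrier := generate G (set hs)\<rparr>)"
    and e: "\<forall>k < length gs. \<phi> (gs ! k) = hs ! k"
    using d unfolding defines_iso_def by blast
  have u: "gs ! k \<in> generate G (set gs)" using k by (intro generate.incl) simp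
  show ?thesis using iso_pow_one(3)[OF is_group gs hs phi u, of n] e k by simp
qed

lemma defines_iso_consistent:
  assumes H: "subgroup H G" and gs: "set gs \<subseteq> H" and hs: "set hs \<subseteq> H"
  shows "defines_iso (G\<lparr>carrier := H\<rparr>) gs hs = defines_iso G gs hs"
  unfolding defines_iso_def using generate_consistent[OF gs H] generate_consistent[OF hs H]
  by simp

lemma reg1:
  assumes tr: "two_tuple_regular G" and fin: "finite (carrier G)"
    and x: "x \<in> carrier G" and a: "a \<in> carrier G" and o: "ord x = ord a"
  obtains \<Psi> where "bij_betw \<Psi> (carrier G) (carrier G)"
    and "\<And>g. g \<in> carrier G \<Longrightarrow> \<exists>\<phi>. \<phi> \<in> iso (G\<lparr>carrier := generate G {x, g}\<rparr>) (G\<lparr>carrier := generate G {a, \<Psi> g}\<rparr>)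
           \<and> \<phi> x = a \<and> \<phi> g = \<Psi> g"
proof -
  obtain \<phi> where phi: "\<phi> \<in> iso (G\<lparr>carrier := generate G {x}\<rparr>) (G\<lparr>carrier := generate G {a}\<rparr>)" "\<phi> x = a"
    using cyclic_iso[OF fin x a o] by blast
  have "defines_iso G [x, x] [a, a]"
    unfolding defines_iso_def
    by (intro conjI exI[of _ \<phi>]) (use phi in \<open>auto simp: nth_Cons'\<close>)
  then obtain \<Psi> where bij: "bij_betw \<Psi> (carrier G) (carrier G)"
    and d: "\<forall>g \<in> carrier G. defines_iso G [x, x, g] [a, a, \<Psi> g]"
    using tr x a unfolding two_tuple_regular_def by blast
  show ?thesis
  proof (rule that[OF bij])
    fix g assume g: "g \<in> carrier G"
    obtain \<phi> where "\<phi> \<in> iso (G\<lparr>carrier := generate G (set [x, x, g])\<rparr>) (G\<lparr>carrier := generate G (set [a, a, \<Psi> g])\<rparr>)"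
      and e: "\<forall>k < 3. \<phi> ([x, x, g] ! k) = [a, a, \<Psi> g] ! k"
      using d g unfolding defines_iso_def by auto
    moreover have "\<phi> x = a" using e[rule_format, of 0] by simp
    moreover have "\<phi> g = \<Psi> g" using e[rule_format, of 2] by simp
    ultimately show "\<exists>\<phi>. \<phi> \<in> iso (G\<lparr>carrier := generate G {x, g}\<rparr>) (G\<lparr>carrier := generate G {a, \<Psi> g}\<rparr>)
           \<and> \<phi> x = a \<and> \<phi> g = \<Psi> g" by auto
  qed
qed

lemma sub_regular:
  assumes tr: "two_tuple_regular G" and H: "subgroup H G"
    and Hdef: "H = {x \<in> carrier G. x [^] (n::nat) = \<one>}"
  shows "two_tuple_regular (G\<lparr>carrier := H\<rparr>)"
  unfolding two_tuple_regular_def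
proof (intro ballI impI)
  fix g1 g2 h1 h2
  assume g1: "g1 \<in> carrier (G\<lparr>carrier := H\<rparr>)" and g2: "g2 \<in> carrier (G\<lparr>carrier := H\<rparr>)"
    and h1: "h1 \<in> carrier (G\<lparr>carrier := H\<rparr>)" and h2: "h2 \<in> carrier (G\<lparr>carrier := H\<rparr>)"
    and d: "defines_iso (G\<lparr>carrier := H\<rparr>) [g1, g2] [h1, h2]"
  have HG: "H \<subseteq> carrier G" using H subgroup.subset by blast
  have gh: "g1 \<in> H" "g2 \<in> H" "h1 \<in> H" "h2 \<in> H" using g1 g2 h1 h2 by auto
  have "defines_iso G [g1, g2] [h1, h2]"
    using d defines_iso_consistent[OF H, of "[g1, g2]" "[h1, h2]"] gh by simp
  then obtain \<Psi> where bij: "bij_betw \<Psi> (carrier G) (carrier G)"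
    and d3: "\<forall>g \<in> carrier G. defines_iso G [g1, g2, g] [h1, h2, \<Psi> g]"
    using tr gh HG unfolding two_tuple_regular_def by blast
  have Pc: "\<Psi> g \<in> carrier G" if "g \<in> carrier G" for g using bij_betw_apply[OF bij that] .
  have key: "\<Psi> g \<in> H \<longleftrightarrow> g \<in> H" if g: "g \<in> carrier G" for g
  proof -
    have "(\<Psi> g) [^] n = \<one> \<longleftrightarrow> g [^] n = \<one>"
      using defines_iso_pow[OF d3[rule_format, OF g], of 2 n] gh HG g Pc[OF g] by auto
    thus ?thesis using Hdef g Pc[OF g] by auto
  qed
  have bijH: "bij_betw \<Psi> H H"
    unfolding bij_betw_def
  proof
    show "inj_on \<Psi> H" using bij HG unfolding bij_betw_def by (meson inj_on_subset)
    show "\<Psi> ` H = H"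
    proof
      show "\<Psi> ` H \<subseteq> H" using key HG by auto
      show "H \<subseteq> \<Psi> ` H"
      proof
        fix h assume h: "h \<in> H"
        then obtain g where g: "g \<in> carrier G" "h = \<Psi> g"
          using bij HG unfolding bij_betw_def by auto
        hence "g \<in> H" using key h by auto
        thus "h \<in> \<Psi> ` H" using g by auto
      qed
    qed
  qed
  show "\<exists>\<Psi>. bij_betw \<Psi> (carrier (G\<lparr>carrier := H\<rparr>)) (carrier (G\<lparr>carrier := H\<rparr>)) \<and>
             (\<forall>g\<in>carrier (G\<lparr>carrier := H\<rparr>). defines_iso (G\<lparr>carrier := H\<rparr>) [g1, g2, g] [h1, h2, \<Psi> g])"
  proof (intro exI conjI ballI)
    show "bij_betw \<Psi> (carrier (G\<lparr>carrier := H\<rparr>)) (carrier (G\<lparr>carrier := H\<rparr>))" using bijH by simp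
    fix g assume "g \<in> carrier (G\<lparr>carrier := H\<rparr>)"
    hence g: "g \<in> H" by simp
    hence "\<Psi> g \<in> H" using bij_betw_apply[OF bijH] by blast
    thus "defines_iso (G\<lparr>carrier := H\<rparr>) [g1, g2, g] [h1, h2, \<Psi> g]"
      using defines_iso_consistent[OF H, of "[g1, g2, g]" "[h1, h2, \<Psi> g]"] gh g d3 HG by auto
  qed
qed

end




definition Wset :: "('a, 'b) monoid_scheme \<Rightarrow> nat \<Rightarrow> 'a set" where
  "Wset G n = {x \<in> carrier G. x [^]\<^bsub>G\<^esub> n = \<one>\<^bsub>G\<^esub>}"

context group begin

lemma Wset_normal:
  assumes "subgroup (Wset G n) G"
  shows "Wset G n \<lhd> G"
  unfolding normal_inv_iff
proof (intro conjI assms ballI)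
  fix g h assume g: "g \<in> carrier G" and h: "h \<in> Wset G n"
  hence hc: "h \<in> carrier G" and h1: "h [^] n = \<one>" unfolding Wset_def by auto
  have "(g \<otimes> h \<otimes> inv g) [^] n = \<one>" using conj_pow[OF g hc] h1 g by simp
  thus "g \<otimes> h \<otimes> inv g \<in> Wset G n" unfolding Wset_def using g hc by simp
qed

lemma power_root:
  assumes tr: "two_tuple_regular G" and fin: "finite (carrier G)" and p: "Factorial_Ring.prime p"
    and ex: "\<forall>x\<in>carrier G. x [^] (p ^ s) = \<one>"
    and y: "y \<in> carrier G" "ord y = p ^ s"
    and i: "i \<le> s" and x: "x \<in> Wset G (p ^ i)"
  shows "\<exists>z\<in>carrier G. x = z [^] (p ^ (s - i))"
proof -
  have xc: "x \<in> carrier G" and x1: "x [^] (p ^ i) = \<one>" using x unfolding Wset_def by auto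
  have "ord x dvd p ^ i" using x1 pow_eq_id[OF xc] by simp
  then obtain j where j: "j \<le> i" "ord x = p ^ j" using divides_primepow_nat[OF p] by blast
  define y' where "y' = y [^] (p ^ (s - j))"
  have y'c: "y' \<in> carrier G" unfolding y'_def using y by simp
  have p0: "p \<noteq> 0" using p by auto
  have "p ^ (s - j) dvd ord y" using y(2) j i by (simp add: le_imp_power_dvd)
  hence "ord y' = p ^ s div p ^ (s - j)" unfolding y'_def using ord_pow[OF y(1)] y(2) p0 by simp
  also have "\<dots> = p ^ j" using power_diff[OF p0, of "s - j" s] j i by simp
  finally have oy': "ord y' = ord x" using j by simp
  obtain \<Psi> where bij: "bij_betw \<Psi> (carrier G) (carrier G)"
    and ph: "\<And>g. g \<in> carrier G \<Longrightarrow> \<exists>\<phi>. \<phi> \<in> iso (G\<lparr>carrier := generate G {y', g}\<rparr>) (G\<lparr>carrier := generate G {x, \<Psi> g}\<rparr>)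
           \<and> \<phi> y' = x \<and> \<phi> g = \<Psi> g"
    using reg1[OF tr fin y'c xc oy'] by blast
  obtain \<phi> where phi: "\<phi> \<in> iso (G\<lparr>carrier := generate G {y', y}\<rparr>) (G\<lparr>carrier := generate G {x, \<Psi> y}\<rparr>)"
    and e: "\<phi> y' = x" "\<phi> y = \<Psi> y" using ph[OF y(1)] by blast
  have Py: "\<Psi> y \<in> carrier G" using bij_betw_apply[OF bij y(1)] .
  have yg: "y \<in> generate G {y', y}" by (rule generate.incl) simp
  have "x = \<phi> (y [^] (p ^ (s - j)))" using e y'_def by simp
  also have "\<dots> = \<Psi> y [^] (p ^ (s - j))"
    using iso_pow_one(2)[OF is_group _ _ phi yg] y'c y(1) xc Py e by simp
  also have "\<dots> = (\<Psi> y [^] (p ^ (i - j))) [^] (p ^ (s - i))"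
  proof -
    have "p ^ (i - j) * p ^ (s - i) = p ^ (s - j)" using j i by (simp flip: power_add)
    thus ?thesis using Py by (simp add: nat_pow_pow)
  qed
  finally show ?thesis using Py by blast
qed

end




context group begin

lemma W_step:
  assumes tr: "two_tuple_regular G" and fin: "finite (carrier G)" and p: "Factorial_Ring.prime p"
    and ex: "\<forall>x\<in>carrier G. x [^] (p ^ s) = \<one>"
    and NS: "subgroup (Wset G (p ^ i)) G" and i: "i < s"
  shows "subgroup (Wset G (p ^ Suc i)) G"
proof -
  define N where "N = Wset G (p ^ i)"
  have Ndef: "x \<in> N \<longleftrightarrow> x \<in> carrier G \<and> x [^] (p ^ i) = \<one>" for x unfolding N_def Wset_def by simp
  have NsG: "subgroup N G" using NS unfolding N_def .
  have nN: "N \<lhd> G" using Wset_normal NS unfolding N_def by blast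
  interpret nN: normal N G by (rule nN)
  have NG: "N \<subseteq> carrier G" using subgroup.subset[OF NsG] .
  have p0: "p \<noteq> 0" using p by auto
  have p1: "p > 1" using p prime_gt_1_nat by blast
  have W1: "Wset G (p ^ Suc i) = {x \<in> carrier G. (x [^] p) [^] (p ^ i) = \<one>}"
    unfolding Wset_def by (auto simp: nat_pow_pow)
  have W1': "x [^] (p ^ Suc i) = (x [^] (p ^ i)) [^] p" if "x \<in> carrier G" for x
    using that by (simp add: nat_pow_pow mult.commute)
  show ?thesis
  proof (cases "N = carrier G")
    case True
    have xi: "x [^] (p ^ i) = \<one>" if "x \<in> carrier G" for x using Ndef[of x] True that by simp
    have "Wset G (p ^ Suc i) = carrier G"
      unfolding Wset_def using W1' xi by auto
    thus ?thesis using subgroup_self by simp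
  next
    case False
    define Q where "Q = G Mod N"
    interpret Q: group Q unfolding Q_def by (rule nN.factorgroup_is_group)
    have cQ: "carrier Q = rcosets N" unfolding Q_def FactGroup_def by simp
    have finQ: "finite (carrier Q)"
    proof -
      have "carrier Q \<subseteq> Pow (carrier G)" unfolding cQ RCOSETS_def r_coset_def by auto
      thus ?thesis using fin by (meson finite_Pow_iff finite_subset)
    qed
    have powQ: "(N #> x) [^]\<^bsub>Q\<^esub> (n::nat) = N #> (x [^] n)" if "x \<in> carrier G" for x n
      unfolding Q_def using nN.FactGroup_pow[OF that] .
    have oneQ: "\<one>\<^bsub>Q\<^esub> = N" unfolding Q_def by simp
    have multQ: "(N #> x) \<otimes>\<^bsub>Q\<^esub> (N #> y) = N #> (x \<otimes> y)" if "x \<in> carrier G" "y \<in> carrier G" for x y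
      unfolding Q_def using nN.rcos_sum[OF that] by simp
    have carQ: "carrier Q = (\<lambda>x. N #> x) ` carrier G" unfolding Q_def by (rule carrier_FactGroup)
    have cQin: "N #> x \<in> carrier Q" if "x \<in> carrier G" for x
      unfolding carQ using that by (rule imageI)
    have inN: "x \<in> N \<longleftrightarrow> N #> x = N" if "x \<in> carrier G" for x
    proof
      assume "x \<in> N" thus "N #> x = N" using nN.rcos_const[OF is_group] by blast
    next
      assume "N #> x = N" thus "x \<in> N" using rcos_self[OF that NsG] by simp
    qed
    have exQ0: "U [^]\<^bsub>Q\<^esub> (p ^ s) = \<one>\<^bsub>Q\<^esub>" if Uc: "U \<in> carrier Q" for U
    proof -
      obtain x where x: "U = N #> x" "x \<in> carrier G" using Uc[unfolded carQ] by (rule imageE)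
      note x = x(2) x(1)
      have "U [^]\<^bsub>Q\<^esub> (p ^ s) = N #> \<one>" using powQ[OF x(1)] ex x by simp
      thus "U [^]\<^bsub>Q\<^esub> (p ^ s) = \<one>\<^bsub>Q\<^esub>" using oneQ NG by simp
    qed
    have exQ: "\<forall>U \<in> carrier Q. U [^]\<^bsub>Q\<^esub> (p ^ s) = \<one>\<^bsub>Q\<^esub>" using exQ0 by blast
    obtain k where k: "order Q = p ^ k" using Q.pgroup_order[OF finQ p exQ] by blast
    have k1: "k \<ge> 1"
    proof (rule ccontr)
      assume "\<not> k \<ge> 1"
      hence "card (rcosets N) = 1" using k cQ unfolding order_def by simp
      hence "card N = order G" using lagrange[OF NsG] by simp
      hence "N = carrier G" using NG fin unfolding order_def by (simp add: card_subset_eq)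
      thus False using False by simp
    qed
    obtain Z where Z: "Z \<in> carrier Q" "Z \<noteq> \<one>\<^bsub>Q\<^esub>" "\<forall>g\<in>carrier Q. Z \<otimes>\<^bsub>Q\<^esub> g = g \<otimes>\<^bsub>Q\<^esub> Z"
      using Q.pgroup_center[OF finQ p k k1] by blast
    have "Q.ord Z dvd p ^ s" using Q.pow_eq_id[OF Z(1), of "p ^ s"] exQ0[OF Z(1)] by simp
    then obtain e where e: "e \<le> s" "Q.ord Z = p ^ e" using divides_primepow_nat[OF p] by blast
    have e1: "e \<ge> 1"
    proof (rule ccontr)
      assume "\<not> e \<ge> 1" hence "Q.ord Z = 1" using e by simp
      thus False using Q.ord_eq_1[OF Z(1)] Z(2) by simp
    qed
    define Z' where "Z' = Z [^]\<^bsub>Q\<^esub> (p ^ (e - 1))"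
    have Z'c: "Z' \<in> carrier Q" unfolding Z'_def using Z(1) by simp
    have "p ^ (e - 1) dvd Q.ord Z" using e e1 by (simp add: le_imp_power_dvd)
    hence "Q.ord Z' = p ^ e div p ^ (e - 1)" unfolding Z'_def using Q.ord_pow[OF Z(1)] e p0 by simp
    also have "\<dots> = p" using power_diff[OF p0, of "e - 1" e] e1 by simp
    finally have oZ': "Q.ord Z' = p" .
    have Z'cent: "Z' \<otimes>\<^bsub>Q\<^esub> g = g \<otimes>\<^bsub>Q\<^esub> Z'" if "g \<in> carrier Q" for g
      unfolding Z'_def using Q.pow_comm[OF Z(1) that] Z(3) that by blast
    obtain y where y: "Z' = N #> y" "y \<in> carrier G" using Z'c[unfolded carQ] by (rule imageE)
    note y = y(2) y(1)
    have yN: "y \<notin> N"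
    proof
      assume "y \<in> N" hence "Z' = \<one>\<^bsub>Q\<^esub>" using inN[OF y(1)] y oneQ by simp
      hence "Q.ord Z' = 1" by simp
      thus False using oZ' p1 by simp
    qed
    have "Z' [^]\<^bsub>Q\<^esub> p = \<one>\<^bsub>Q\<^esub>" using Q.pow_ord_eq_1[OF Z'c] oZ' by simp
    hence "N #> (y [^] p) = N" using powQ[OF y(1)] y oneQ by simp
    hence ypN: "y [^] p \<in> N" using inN[OF nat_pow_closed[OF y(1)]] by simp
    have oy: "ord y = p ^ Suc i"
    proof -
      have "(y [^] p) [^] (p ^ i) = \<one>" using ypN Ndef[of "y [^] p"] by simp
      hence "y [^] (p ^ Suc i) = \<one>" using y(1) by (simp add: nat_pow_pow)
      hence "ord y dvd p ^ Suc i" using pow_eq_id[OF y(1)] by simp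
      then obtain j where j: "j \<le> Suc i" "ord y = p ^ j" using divides_primepow_nat[OF p] by blast
      have "j = Suc i"
      proof (rule ccontr)
        assume "j \<noteq> Suc i" hence "j \<le> i" using j by simp
        hence "ord y dvd p ^ i" using j by (simp add: le_imp_power_dvd)
        hence "y [^] (p ^ i) = \<one>" using pow_eq_id[OF y(1)] by simp
        thus False using yN Ndef[of y] y(1) by simp
      qed
      thus ?thesis using j by simp
    qed
    have Py: "(g \<otimes> y) \<otimes> inv (y \<otimes> g) \<in> N" if g: "g \<in> carrier G" for g
    proof -
      have "(N #> y) \<otimes>\<^bsub>Q\<^esub> (N #> g) = (N #> g) \<otimes>\<^bsub>Q\<^esub> (N #> y)"
        using Z'cent[OF cQin[OF g]] y by simp
      hence e: "N #> (y \<otimes> g) = N #> (g \<otimes> y)" using multQ y(1) g by simp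
      have "g \<otimes> y \<in> N #> (y \<otimes> g)" unfolding e using rcos_self[OF _ NsG] g y(1) by simp
      thus ?thesis using subgroup.rcos_module_imp[OF NsG is_group] g y(1) by simp
    qed
    have ordW: "ord a = p ^ Suc i" if a: "a \<in> Wset G (p ^ Suc i)" "a \<notin> N" for a
    proof -
      have ac: "a \<in> carrier G" and a1: "a [^] (p ^ Suc i) = \<one>" using a unfolding Wset_def by auto
      have "ord a dvd p ^ Suc i" using a1 pow_eq_id[OF ac] by simp
      then obtain j where j: "j \<le> Suc i" "ord a = p ^ j" using divides_primepow_nat[OF p] by blast
      have "j = Suc i"
      proof (rule ccontr)
        assume "j \<noteq> Suc i" hence "j \<le> i" using j by simp
        hence "ord a dvd p ^ i" using j by (simp add: le_imp_power_dvd)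
        hence "a [^] (p ^ i) = \<one>" using pow_eq_id[OF ac] by simp
        thus False using a(2) Ndef[of a] ac by simp
      qed
      thus ?thesis using j by simp
    qed
    have Pa: "(g \<otimes> a) \<otimes> inv (a \<otimes> g) \<in> N" if a: "a \<in> Wset G (p ^ Suc i)" and g: "g \<in> carrier G" for a g
    proof (cases "a \<in> N")
      case True
      have ac: "a \<in> carrier G" using True NG by auto
      have "(g \<otimes> a) \<otimes> inv (a \<otimes> g) = (g \<otimes> a \<otimes> inv g) \<otimes> inv a"
        using ac g by (simp add: inv_mult_group m_assoc)
      moreover have "g \<otimes> a \<otimes> inv g \<in> N" using nN.inv_op_closed2 True g by blast
      moreover have "inv a \<in> N" using True NsG subgroup.m_inv_closed by blast
      ultimately show ?thesis using NsG subgroup.m_closed by metis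
    next
      case False
      have ac: "a \<in> carrier G" using a unfolding Wset_def by auto
      have oa: "ord y = ord a" using ordW[OF a False] oy by simp
      obtain \<Psi> where bij: "bij_betw \<Psi> (carrier G) (carrier G)"
        and ph: "\<And>g. g \<in> carrier G \<Longrightarrow> \<exists>\<phi>. \<phi> \<in> iso (G\<lparr>carrier := generate G {y, g}\<rparr>) (G\<lparr>carrier := generate G {a, \<Psi> g}\<rparr>)
           \<and> \<phi> y = a \<and> \<phi> g = \<Psi> g"
        using reg1[OF tr fin y(1) ac oa] by blast
      obtain g0 where g0: "g0 \<in> carrier G" "g = \<Psi> g0"
        using bij g unfolding bij_betw_def by auto
      obtain \<phi> where phi: "\<phi> \<in> iso (G\<lparr>carrier := generate G {y, g0}\<rparr>) (G\<lparr>carrier := generate G {a, \<Psi> g0}\<rparr>)"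
        and ph1: "\<phi> y = a" "\<phi> g0 = \<Psi> g0" using ph[OF g0(1)] by blast
      have A: "{y, g0} \<subseteq> carrier G" using y(1) g0(1) by simp
      have B: "{a, \<Psi> g0} \<subseteq> carrier G" using ac g0 g by simp
      have uy: "y \<in> generate G {y, g0}" by (rule generate.incl) simp
      have ug: "g0 \<in> generate G {y, g0}" by (rule generate.incl) simp
      have cin: "(g0 \<otimes> y) \<otimes> inv (y \<otimes> g0) \<in> generate G {y, g0}"
        using iso_mult_inv(1)[OF is_group A B phi uy ug] .
      have "((g0 \<otimes> y) \<otimes> inv (y \<otimes> g0)) [^] (p ^ i) = \<one>" using Py[OF g0(1)] Ndef[of "(g0 \<otimes> y) \<otimes> inv (y \<otimes> g0)"] by simp
      hence "(\<phi> ((g0 \<otimes> y) \<otimes> inv (y \<otimes> g0))) [^] (p ^ i) = \<one>"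
        using iso_pow_one(3)[OF is_group A B phi cin] by simp
      hence "((g \<otimes> a) \<otimes> inv (a \<otimes> g)) [^] (p ^ i) = \<one>"
        using iso_mult_inv(2)[OF is_group A B phi uy ug] ph1 g0 by simp
      thus ?thesis using Ndef[of "(g \<otimes> a) \<otimes> inv (a \<otimes> g)"] ac g by simp
    qed
    show ?thesis
    proof (rule subgroupI)
      show "Wset G (p ^ Suc i) \<subseteq> carrier G" unfolding Wset_def by auto
      show "Wset G (p ^ Suc i) \<noteq> {}" unfolding Wset_def by auto
    next
      fix a assume "a \<in> Wset G (p ^ Suc i)"
      thus "inv a \<in> Wset G (p ^ Suc i)" unfolding Wset_def by (simp add: nat_pow_inv)
    next
      fix a b assume a: "a \<in> Wset G (p ^ Suc i)" and b: "b \<in> Wset G (p ^ Suc i)"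
      have ac: "a \<in> carrier G" and bc: "b \<in> carrier G" using a b unfolding Wset_def by auto
      have cN: "(b \<otimes> a) \<otimes> inv (a \<otimes> b) \<in> N" using Pa[OF a bc] .
      have "b \<otimes> a = ((b \<otimes> a) \<otimes> inv (a \<otimes> b)) \<otimes> (a \<otimes> b)"
        using ac bc by (simp add: m_assoc)
      hence "N #> (b \<otimes> a) = (N #> ((b \<otimes> a) \<otimes> inv (a \<otimes> b))) #> (a \<otimes> b)"
        using coset_mult_assoc[OF NG, of "(b \<otimes> a) \<otimes> inv (a \<otimes> b)" "a \<otimes> b"] ac bc by simp
      also have "\<dots> = N #> (a \<otimes> b)" using inN[of "(b \<otimes> a) \<otimes> inv (a \<otimes> b)"] cN ac bc by simp
      finally have comm: "N #> (b \<otimes> a) = N #> (a \<otimes> b)" .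
      have apN: "N #> (a [^] p) = N"
      proof -
        have "(a [^] p) [^] (p ^ i) = \<one>" using a W1 by simp
        hence "a [^] p \<in> N" using Ndef[of "a [^] p"] ac by simp
        thus ?thesis using inN[OF nat_pow_closed[OF ac]] by simp
      qed
      have bpN: "N #> (b [^] p) = N"
      proof -
        have "(b [^] p) [^] (p ^ i) = \<one>" using b W1 by simp
        hence "b [^] p \<in> N" using Ndef[of "b [^] p"] bc by simp
        thus ?thesis using inN[OF nat_pow_closed[OF bc]] by simp
      qed
      have cQ': "(N #> a) \<otimes>\<^bsub>Q\<^esub> (N #> b) = (N #> b) \<otimes>\<^bsub>Q\<^esub> (N #> a)"
        using multQ ac bc comm by simp
      have aQ: "N #> a \<in> carrier Q" "N #> b \<in> carrier Q" using cQin ac bc by auto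
      have "N #> ((a \<otimes> b) [^] p) = ((N #> a) \<otimes>\<^bsub>Q\<^esub> (N #> b)) [^]\<^bsub>Q\<^esub> p"
        using powQ multQ ac bc by simp
      also have "\<dots> = (N #> a) [^]\<^bsub>Q\<^esub> p \<otimes>\<^bsub>Q\<^esub> (N #> b) [^]\<^bsub>Q\<^esub> p"
        using Q.pow_mult_distrib[OF cQ' aQ] .
      also have "\<dots> = N" using powQ ac bc apN bpN oneQ Q.l_one[of N] Q.one_closed by simp
      finally have "(a \<otimes> b) [^] p \<in> N" using inN[OF nat_pow_closed[OF m_closed[OF ac bc]]] by simp
      hence "((a \<otimes> b) [^] p) [^] (p ^ i) = \<one>" using Ndef[of "(a \<otimes> b) [^] p"] by simp
      thus "a \<otimes> b \<in> Wset G (p ^ Suc i)" using W1 ac bc by simp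
    qed
  qed
qed

end



lemma (in group) main_result:
  fixes p s :: nat
  assumes "Factorial_Ring.prime p"
    and "True" and "finite (carrier G)"
    and "two_tuple_regular G"
    and "group_exponent G = p ^ s"
  shows "\<forall>i \<le> s.
           (\<forall>x \<in> Omega G p i. group.ord G x \<le> p ^ i \<and>
               (\<exists>y \<in> carrier G. x = y [^]\<^bsub>G\<^esub> (p ^ (s - i))))
         \<and> two_tuple_regular (G\<lparr>carrier := Omega G p i\<rparr>)"
proof -
  note p = assms(1) and fin = assms(3) and tr = assms(4) and exps = assms(5)
  have p0: "p \<noteq> 0" using p by auto
  have p1: "p > 1" using p prime_gt_1_nat by blast
  have L: "Lcm (ord ` carrier G) = p ^ s" using exps unfolding group_exponent_def .
  have od: "ord x dvd p ^ s" if "x \<in> carrier G" for x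
    using dvd_Lcm[of "ord x" "ord ` carrier G"] that L by simp
  have ex: "\<forall>x\<in>carrier G. x [^] (p ^ s) = \<one>"
    using od pow_eq_id by blast
  have ey: "\<exists>y\<in>carrier G. ord y = p ^ s"
  proof (cases "s = 0")
    case True thus ?thesis by (intro bexI[of _ \<one>]) simp_all
  next
    case False
    show ?thesis
    proof (rule ccontr)
      assume nn: "\<not> ?thesis"
      have "ord x dvd p ^ (s - 1)" if x: "x \<in> carrier G" for x
      proof -
        obtain j where j: "j \<le> s" "ord x = p ^ j" using od[OF x] divides_primepow_nat[OF p] by blast
        have "j \<noteq> s" using nn x j by auto
        hence "j \<le> s - 1" using j by simp
        thus ?thesis using j by (simp add: le_imp_power_dvd)
      qed
      hence "Lcm (ord ` carrier G) dvd p ^ (s - 1)" by (intro Lcm_least) auto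
      hence "p ^ s dvd p ^ (s - 1)" using L by simp
      hence "p ^ s \<le> p ^ (s - 1)" using p0 by (intro dvd_imp_le) simp_all
      moreover have "p ^ (s - 1) < p ^ s" using p1 False by (simp add: power_strict_increasing_iff)
      ultimately show False by simp
    qed
  qed
  then obtain y where y: "y \<in> carrier G" "ord y = p ^ s" by blast
  have Wsub: "i \<le> s \<Longrightarrow> subgroup (Wset G (p ^ i)) G" for i
  proof (induction i)
    case 0
    have "Wset G (p ^ 0) = {\<one>}" unfolding Wset_def by auto
    thus ?case using triv_subgroup by simp
  next
    case (Suc i)
    thus ?case using W_step[OF tr fin p ex Suc.IH] by simp
  qed
  have Om: "Omega G p i = Wset G (p ^ i)" if "i \<le> s" for i
  proof -
    have sW: "Wset G (p ^ i) \<subseteq> carrier G" unfolding Wset_def by auto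
    have "Omega G p i = generate G (Wset G (p ^ i))" unfolding Omega_def Wset_def by simp
    also have "\<dots> = Wset G (p ^ i)"
    proof
      show "generate G (Wset G (p ^ i)) \<subseteq> Wset G (p ^ i)"
        using generate_subgroup_incl[OF subset_refl Wsub[OF that]] .
      show "Wset G (p ^ i) \<subseteq> generate G (Wset G (p ^ i))" by (rule subsetI, rule generate.incl)
    qed
    finally show ?thesis .
  qed
  show ?thesis
  proof (intro allI impI conjI ballI)
    fix i x assume i: "i \<le> s" and x: "x \<in> Omega G p i"
    have xW: "x \<in> Wset G (p ^ i)" using x Om[OF i] by simp
    hence xc: "x \<in> carrier G" and x1: "x [^] (p ^ i) = \<one>" unfolding Wset_def by auto
    have "ord x dvd p ^ i" using pow_eq_id[OF xc, of "p ^ i"] x1 by simp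
    thus "ord x \<le> p ^ i" using p0 by (intro dvd_imp_le) simp_all
    show "\<exists>y\<in>carrier G. x = y [^] (p ^ (s - i))"
      using power_root[OF tr fin p ex y i xW] .
  next
    fix i assume i: "i \<le> s"
    have "two_tuple_regular (G\<lparr>carrier := Wset G (p ^ i)\<rparr>)"
      using sub_regular[OF tr Wsub[OF i], of "p ^ i"] unfolding Wset_def by simp
    thus "two_tuple_regular (G\<lparr>carrier := Omega G p i\<rparr>)" using Om[OF i] by simp
  qed
qed

theorem lemma4p5:
  fixes G :: "('a, 'b) monoid_scheme" and p s :: nat
  assumes "Factorial_Ring.prime p"
    and "group G" and "finite (carrier G)"
    and "two_tuple_regular G"
    and "group_exponent G = p ^ s"
  shows "\<forall>i \<le> s.
           (\<forall>x \<in> Omega G p i. group.ord G x \<le> p ^ i \<and>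
               (\<exists>y \<in> carrier G. x = y [^]\<^bsub>G\<^esub> (p ^ (s - i))))
         \<and> two_tuple_regular (G\<lparr>carrier := Omega G p i\<rparr>)"
  using group.main_result[OF assms(2) assms(1) TrueI assms(3) assms(4) assms(5)] .


end
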